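(* Let $n\ge 1$ and let $Q=Q_1\otimes\cdots\otimes Q_n\in\mathcal{P}_n$ satisfy $Q^2=I$, $Q\neq\pm I$, and $Q$ anticommutes with $Z\otimes I\otimes\cdots\otimes I$. Then there exists a unique $X$-circuit $M$ on $n$ qubits such that $M\bullet Q=I\otimes\cdots\otimes I\otimes X$.
   Context: Matrices: $X=\begin{bmatrix}0&1\\1&0\end{bmatrix}$, $Z=\begin{bmatrix}1&0\\0&-1\end{bmatrix}$, $H=\frac{1}{\sqrt2}\begin{bmatrix}1&1\\1&-1\end{bmatrix}$, $CZ=\mathrm{diag}(1,1,1,-1)$. Operators on $n$ qubits act on $(\mathbb{R}^2)^{\otimes n}$, qubit $1$ being the first tensor factor; a one-qubit gate on qubit $i$, or a two-qubit gate on qubits $i,i+1$ (with qubit $i$ the first tensor factor of the gate, called its upper qubit), denotes that matrix tensored with identities on the other qubits. For matrices $C,P$, $C\bullet P=CPC^{-1}$. Real Pauli group: $\mathcal{P}_n=\{\pm(P_1\otimes\cdots\otimes P_n)\mid P_i\in\{I,X,Z,XZ\}\}$. A circuit is a finite sequence of gates $g_1,\dots,g_k$ ($g_1$ applied first); its operator is $g_k\cdots g_1$, and $M\bullet Q$ means (operator of $M$)$\bullet Q$. Derived generators (formal symbols with defining gate sequences; in a two-qubit symbol subscript $1$ is the upper, $2$ the lower qubit; ";" separates steps): $E_1$ = empty, $E_2$ = $Z$; $D_1$ = $CZ;\,H_1,H_2;\,CZ;\,H_1,H_2;\,CZ;\,H_2$; $D_2$ = $H_1;\,CZ;\,H_1,H_2;\,CZ;\,H_2$;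 $D_3$ = $H_1,H_2;\,CZ;\,H_1,H_2;\,CZ;\,H_2$; $D_4$ = $H_1;\,CZ;\,H_1,H_2;\,CZ;\,H_2;\,CZ$. An $X$-circuit on $n$ qubits is a sequence of symbols of the form $D_{d_1}$ on qubits $1,2$, then $D_{d_2}$ on qubits $2,3$, ..., then $D_{d_{n-1}}$ on qubits $n-1,n$, then $E_e$ on qubit $n$ (for $n=1$ it is just $E_e$ on qubit 1), with $d_i\in\{1,2,3,4\}$, $e\in\{1,2\}$; two $X$-circuits are equal when their symbol sequences coincide. *)

theory Defs
  imports "Jordan_Normal_Form.Matrix"
begin

definition Xm :: "real mat" where "Xm = mat_of_rows_list 2 [[0,1],[1,0]]"
definition Zm :: "real mat" where "Zm = mat_of_rows_list 2 [[1,0],[0,-1]]"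
definition Hm :: "real mat" where
  "Hm = (1 / sqrt 2) \<cdot>\<^sub>m mat_of_rows_list 2 [[1,1],[1,-1]]"
definition CZm :: "real mat" where
  "CZm = mat_of_rows_list 4 [[1,0,0,0],[0,1,0,0],[0,0,1,0],[0,0,0,-1]]"

text \<open>Kronecker (tensor) product; the first factor is the most significant index.\<close>
definition kron :: "real mat \<Rightarrow> real mat \<Rightarrow> real mat" where
  "kron A B = mat (dim_row A * dim_row B) (dim_col A * dim_col B)
     (\<lambda>(i,j). A $$ (i div dim_row B, j div dim_col B) * B $$ (i mod dim_row B, j mod dim_col B))"

text \<open>Tensor product of a list of matrices (first list element = qubit 1).\<close>
fun tensor_list :: "real mat list \<Rightarrow> real mat" where
  "tensor_list [] = 1\<^sub>m 1"
| "tensor_list (A # As) = kron A (tensor_list As)"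

text \<open>Conjugation C \<bullet> P = C P C^{-1}.\<close>
definition mat_inv :: "real mat \<Rightarrow> real mat" where
  "mat_inv C = (SOME B. B \<in> carrier_mat (dim_row C) (dim_row C) \<and>
                   C * B = 1\<^sub>m (dim_row C) \<and> B * C = 1\<^sub>m (dim_row C))"

definition conj_mat :: "real mat \<Rightarrow> real mat \<Rightarrow> real mat" where
  "conj_mat C P = C * P * mat_inv C"

definition pauli1 :: "real mat set" where
  "pauli1 = {1\<^sub>m 2, Xm, Zm, Xm * Zm}"

definition pauli_group :: "nat \<Rightarrow> real mat set" where
  "pauli_group n = {s \<cdot>\<^sub>m tensor_list Ps | s Ps.
      s \<in> {1, -1} \<and> length Ps = n \<and> set Ps \<subseteq> pauli1}"

text \<open>Gates on n qubits (qubits numbered 1..n). CZ_g i acts on qubits i, i+1 with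
  qubit i as upper qubit.\<close>
datatype gate = H_g nat | Z_g nat | CZ_g nat

definition op1 :: "nat \<Rightarrow> nat \<Rightarrow> real mat \<Rightarrow> real mat" where
  "op1 n i G = kron (1\<^sub>m (2 ^ (i - 1))) (kron G (1\<^sub>m (2 ^ (n - i))))"

definition op2 :: "nat \<Rightarrow> nat \<Rightarrow> real mat \<Rightarrow> real mat" where
  "op2 n i G = kron (1\<^sub>m (2 ^ (i - 1))) (kron G (1\<^sub>m (2 ^ (n - i - 1))))"

fun gate_op :: "nat \<Rightarrow> gate \<Rightarrow> real mat" where
  "gate_op n (H_g i) = op1 n i Hm"
| "gate_op n (Z_g i) = op1 n i Zm"
| "gate_op n (CZ_g i) = op2 n i CZm"

text \<open>Operator of a circuit g_1,...,g_k (g_1 applied first) is g_k \<cdots> g_1.\<close>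
definition circuit_op :: "nat \<Rightarrow> gate list \<Rightarrow> real mat" where
  "circuit_op n gs = foldl (\<lambda>acc g. gate_op n g * acc) (1\<^sub>m (2 ^ n)) gs"

text \<open>Derived generators. D d i acts on qubits i (upper, subscript 1) and i+1
  (lower, subscript 2); E e i acts on qubit i.\<close>
fun D_gates :: "nat \<Rightarrow> nat \<Rightarrow> gate list" where
  "D_gates d i =
    (if d = 1 then [CZ_g i, H_g i, H_g (i+1), CZ_g i, H_g i, H_g (i+1), CZ_g i, H_g (i+1)]
     else if d = 2 then [H_g i, CZ_g i, H_g i, H_g (i+1), CZ_g i, H_g (i+1)]
     else if d = 3 then [H_g i, H_g (i+1), CZ_g i, H_g i, H_g (i+1), CZ_g i, H_g (i+1)]
     else if d = 4 then [H_g i, CZ_g i, H_g i, H_g (i+1), CZ_g i, H_g (i+1), CZ_g i]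
     else [])"

fun E_gates :: "nat \<Rightarrow> nat \<Rightarrow> gate list" where
  "E_gates e i = (if e = 2 then [Z_g i] else [])"

text \<open>An X-circuit on n qubits is given by its symbol sequence
  D_{d_1}, ..., D_{d_{n-1}}, E_e, i.e. by (ds, e) with ds = [d_1,...,d_{n-1}].\<close>
definition xcircuit_valid :: "nat \<Rightarrow> nat list \<Rightarrow> nat \<Rightarrow> bool" where
  "xcircuit_valid n ds e \<longleftrightarrow> length ds = n - 1 \<and> set ds \<subseteq> {1,2,3,4} \<and> e \<in> {1,2}"

definition xcircuit_gates :: "nat \<Rightarrow> nat list \<Rightarrow> nat \<Rightarrow> gate list" where
  "xcircuit_gates n ds e = concat (map (\<lambda>k. D_gates (ds ! k) (k + 1)) [0..<n - 1]) @ E_gates e n"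

definition Z_first :: "nat \<Rightarrow> real mat" where
  "Z_first n = tensor_list (Zm # replicate (n - 1) (1\<^sub>m 2))"

definition X_last :: "nat \<Rightarrow> real mat" where
  "X_last n = tensor_list (replicate (n - 1) (1\<^sub>m 2) @ [Xm])"

end

theory Submission
  imports Defs
begin

lemma kron_dims[simp]:
  "dim_row (kron A B) = dim_row A * dim_row B" "dim_col (kron A B) = dim_col A * dim_col B"
  by (auto simp: kron_def)

lemma kron_index[simp]:
  "i < dim_row A * dim_row B \<Longrightarrow> j < dim_col A * dim_col B \<Longrightarrow>
   kron A B $$ (i,j) = A $$ (i div dim_row B, j div dim_col B) * B $$ (i mod dim_row B, j mod dim_col B)"
  by (auto simp: kron_def)

lemma kron_carrier:
  "A \<in> carrier_mat a1 a2 \<Longrightarrow> B \<in> carrier_mat b1 b2 \<Longrightarrow> kron A B \<in> carrier_mat (a1*b1) (a2*b2)"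
  unfolding carrier_mat_def by simp

lemma sum_split_mult:
  fixes f :: "nat \<Rightarrow> real"
  shows "(\<Sum>k<a*b. f k) = (\<Sum>i<a. \<Sum>j<b. f (i*b+j))"
proof -
  have "(\<Sum>i<a. \<Sum>j<b. f (i*b+j)) = sum (\<lambda>(i,j). f (i*b+j)) ({..<a} \<times> {..<b})"
    by (simp add: sum.cartesian_product)
  also have "\<dots> = (\<Sum>k<a*b. f k)"
  proof (rule sum.reindex_bij_witness[of _ "\<lambda>k. (k div b, k mod b)" "\<lambda>(i,j). i*b+j"])
    fix k assume "k \<in> {..<a*b}"
    then show "(case (k div b, k mod b) of (i, j) \<Rightarrow> i * b + j) = k" by simp
  next
    fix k assume k: "k \<in> {..<a*b}"
    then have "b > 0" by (cases b) auto
    with k show "(k div b, k mod b) \<in> {..<a} \<times> {..<b}"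
      by (auto simp: less_mult_imp_div_less)
  next
    fix ij assume "ij \<in> {..<a} \<times> {..<b}"
    then show "((case ij of (i, j) \<Rightarrow> i * b + j) div b, (case ij of (i, j) \<Rightarrow> i * b + j) mod b) = ij"
      by auto
  next
    fix ij assume "ij \<in> {..<a} \<times> {..<b}"
    then show "(case ij of (i, j) \<Rightarrow> i * b + j) \<in> {..<a * b}"
    proof (cases ij)
      case (Pair i j)
      with \<open>ij \<in> _\<close> have "i < a" "j < b" by auto
      then have "i*b+j < (i+1)*b" by simp
      also have "\<dots> \<le> a*b" using \<open>i < a\<close> by (intro mult_right_mono) auto
      finally show ?thesis using Pair by simp
    qed
  next
    fix ij assume "ij \<in> {..<a} \<times> {..<b}"
    then show "f (case ij of (i, j) \<Rightarrow> i * b + j) = (case ij of (i, j) \<Rightarrow> f (i * b + j))"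
      by (cases ij) simp
  qed
  finally show ?thesis by simp
qed


lemma kron_mult:
  assumes A: "A \<in> carrier_mat a1 a2" and B: "B \<in> carrier_mat b1 b2"
    and C: "C \<in> carrier_mat a2 a3" and D: "D \<in> carrier_mat b2 b3"
  shows "kron A B * kron C D = kron (A * C) (B * D)"
proof (rule eq_matI)
  fix i j assume i: "i < dim_row (kron (A * C) (B * D))" and j: "j < dim_col (kron (A * C) (B * D))"
  have i': "i < a1 * b1" and j': "j < a3 * b3" using i j A B C D by auto
  have b1: "b1 > 0" using i' by (cases b1) auto
  have b3: "b3 > 0" using j' by (cases b3) auto
  have id: "i div b1 < a1" "j div b3 < a3" "i mod b1 < b1" "j mod b3 < b3"
    using i' j' b1 b3 by (auto simp: less_mult_imp_div_less)
  have "(kron A B * kron C D) $$ (i,j) = (\<Sum>k<a2*b2. kron A B $$ (i,k) * kron C D $$ (k,j))"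
    using i' j' A B C D by (simp add: scalar_prod_def lessThan_atLeast0)
  also have "\<dots> = (\<Sum>k<a2*b2. A $$ (i div b1, k div b2) * B $$ (i mod b1, k mod b2) *
          (C $$ (k div b2, j div b3) * D $$ (k mod b2, j mod b3)))"
    using i' j' A B C D by (intro sum.cong) auto
  also have "\<dots> = (\<Sum>p<a2. \<Sum>q<b2. A $$ (i div b1, p) * B $$ (i mod b1, q) *
          (C $$ (p, j div b3) * D $$ (q, j mod b3)))"
    by (subst sum_split_mult) (intro sum.cong refl, simp)
  also have "\<dots> = (\<Sum>p<a2. A $$ (i div b1, p) * C $$ (p, j div b3)) *
        (\<Sum>q<b2. B $$ (i mod b1, q) * D $$ (q, j mod b3))"
    by (simp add: sum_product algebra_simps)
  also have "\<dots> = kron (A * C) (B * D) $$ (i,j)"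
    using i' j' id A B C D by (simp add: scalar_prod_def lessThan_atLeast0)
  finally show "(kron A B * kron C D) $$ (i,j) = kron (A * C) (B * D) $$ (i,j)" .
next
  show "dim_row (kron A B * kron C D) = dim_row (kron (A * C) (B * D))" by simp
next
  show "dim_col (kron A B * kron C D) = dim_col (kron (A * C) (B * D))" by simp
qed


lemma kron_assoc:
  "kron (kron A B) C = kron A (kron B C)"
proof (rule eq_matI)
  fix i j assume i: "i < dim_row (kron A (kron B C))" and j: "j < dim_col (kron A (kron B C))"
  let ?a = "dim_row A" and ?b = "dim_row B" and ?c = "dim_row C"
  let ?a' = "dim_col A" and ?b' = "dim_col B" and ?c' = "dim_col C"
  have i1: "i < ?a * ?b * ?c" and j1: "j < ?a' * ?b' * ?c'" using i j by (simp_all add: mult.assoc)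
  have "?c > 0" using i1 by (cases ?c) auto
  have "?c' > 0" using j1 by (cases ?c') auto
  have e1: "i div ?c div ?b = i div (?b * ?c)" by (metis div_mult2_eq mult.commute)
  have e2: "i div ?c mod ?b = i mod (?b * ?c) div ?c"
  proof -
    have "i mod (?b * ?c) = ?c * (i div ?c mod ?b) + i mod ?c" by (metis mod_mult2_eq mult.commute)
    then show ?thesis using \<open>?c > 0\<close> by simp
  qed
  have e3: "i mod (?b * ?c) mod ?c = i mod ?c" by (simp add: mod_mod_cancel)
  have f1: "j div ?c' div ?b' = j div (?b' * ?c')" by (metis div_mult2_eq mult.commute)
  have f2: "j div ?c' mod ?b' = j mod (?b' * ?c') div ?c'"
  proof -
    have "j mod (?b' * ?c') = ?c' * (j div ?c' mod ?b') + j mod ?c'" by (metis mod_mult2_eq mult.commute)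
    then show ?thesis using \<open>?c' > 0\<close> by simp
  qed
  have f3: "j mod (?b' * ?c') mod ?c' = j mod ?c'" by (simp add: mod_mod_cancel)
  have i2: "i div ?c < ?a * ?b" using i1 by (simp add: less_mult_imp_div_less)
  have j2: "j div ?c' < ?a' * ?b'" using j1 by (simp add: less_mult_imp_div_less)
  have i3: "i mod (?b * ?c) < ?b * ?c" using \<open>?c > 0\<close> i1 by (metis mod_less_divisor mult_eq_0_iff not_gr0 not_less_zero)
  have j3: "j mod (?b' * ?c') < ?b' * ?c'" using \<open>?c' > 0\<close> j1 by (metis mod_less_divisor mult_eq_0_iff not_gr0 not_less_zero)
  show "kron (kron A B) C $$ (i,j) = kron A (kron B C) $$ (i,j)"
    using i1 j1 i2 j2 i3 j3 by (simp add: e1 e2 e3 f1 f2 f3 mult.assoc)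
next
  show "dim_row (kron (kron A B) C) = dim_row (kron A (kron B C))" by (simp add: mult.assoc)
next
  show "dim_col (kron (kron A B) C) = dim_col (kron A (kron B C))" by (simp add: mult.assoc)
qed

lemma kron_one_left[simp]: "kron (1\<^sub>m 1) A = A"
  by (rule eq_matI) auto

lemma kron_one_right[simp]: "kron A (1\<^sub>m 1) = A"
  by (rule eq_matI) auto

lemma kron_one_one: "kron (1\<^sub>m a) (1\<^sub>m b) = 1\<^sub>m (a * b)"
proof (rule eq_matI)
  fix i j assume "i < dim_row (1\<^sub>m (a * b))" "j < dim_col (1\<^sub>m (a * b))"
  then have i: "i < a * b" and j: "j < a * b" by auto
  have "b > 0" using i by (cases b) auto
  have "(i div b = j div b \<and> i mod b = j mod b) \<longleftrightarrow> i = j"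
    by (metis div_mult_mod_eq)
  then show "kron (1\<^sub>m a) (1\<^sub>m b) $$ (i, j) = 1\<^sub>m (a * b) $$ (i, j)"
    using i j \<open>b > 0\<close> by (simp add: less_mult_imp_div_less) (metis div_mult_mod_eq)
qed auto

lemma kron_smult_left: "kron (c \<cdot>\<^sub>m A) B = c \<cdot>\<^sub>m kron A B"
  by (rule eq_matI) (auto simp: less_mult_imp_div_less)

lemma kron_smult_right: "kron A (c \<cdot>\<^sub>m B) = c \<cdot>\<^sub>m kron A B"
proof (rule eq_matI)
  fix i j assume "i < dim_row (c \<cdot>\<^sub>m kron A B)" "j < dim_col (c \<cdot>\<^sub>m kron A B)"
  then have i: "i < dim_row A * dim_row B" and j: "j < dim_col A * dim_col B" by auto
  have "dim_row B > 0" using i by (cases "dim_row B") auto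
  have "dim_col B > 0" using j by (cases "dim_col B") auto
  have "i mod dim_row B < dim_row B" "j mod dim_col B < dim_col B"
    using \<open>dim_row B > 0\<close> \<open>dim_col B > 0\<close> by auto
  then show "kron A (c \<cdot>\<^sub>m B) $$ (i, j) = (c \<cdot>\<^sub>m kron A B) $$ (i, j)"
    using i j by simp
qed auto


lemma all_less_2: "(\<forall>i<(2::nat). P i) \<longleftrightarrow> P 0 \<and> P 1"
  by (auto simp: less_Suc_eq numeral_2_eq_2)
lemma all_less_4: "(\<forall>i<(4::nat). P i) \<longleftrightarrow> P 0 \<and> P 1 \<and> P 2 \<and> P 3"
  by (auto simp: less_Suc_eq numeral_eq_Suc)
lemma sum_lt_2: "(\<Sum>k<2::nat. f k) = f 0 + (f 1 :: real)"
  by (simp add: numeral_2_eq_2)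

lemma mat_eq_entries:
  assumes "A \<in> carrier_mat n n" "B \<in> carrier_mat n n"
    "\<forall>i<n. \<forall>j<n. A $$ (i,j) = B $$ (i,j)"
  shows "A = B"
  using assms unfolding carrier_mat_def by (intro eq_matI) simp_all

lemma mat_mult_mat: "mat n k f * mat k m g = mat n m (\<lambda>(i,j). \<Sum>l<k. f (i,l) * g (l,j))"
  by (rule eq_matI) (simp_all add: scalar_prod_def lessThan_atLeast0)

lemma mat_eq_mat: "mat n m f = mat n m g \<longleftrightarrow> (\<forall>i<n. \<forall>j<m. f (i,j) = g (i,j))"
  by (auto simp: mat_eq_iff)

lemma smult_mat_mat: "c \<cdot>\<^sub>m mat n m f = mat n m (\<lambda>ij. c * f ij)"
  by (rule eq_matI) simp_all

lemma kron_mat_mat: "kron (mat a a' f) (mat b b' g) =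
   mat (a*b) (a'*b') (\<lambda>(i,j). f (i div b, j div b') * g (i mod b, j mod b'))"
proof (rule eq_matI)
  fix i j assume "i < dim_row (mat (a*b) (a'*b') (\<lambda>(i,j). f (i div b, j div b') * g (i mod b, j mod b')))"
    "j < dim_col (mat (a*b) (a'*b') (\<lambda>(i,j). f (i div b, j div b') * g (i mod b, j mod b')))"
  then have i: "i < a*b" and j: "j < a'*b'" by auto
  have "b > 0" using i by (cases b) auto
  have "b' > 0" using j by (cases b') auto
  have "i div b < a" "j div b' < a'" "i mod b < b" "j mod b' < b'"
    using i j \<open>b > 0\<close> \<open>b' > 0\<close> by (auto simp: less_mult_imp_div_less)
  then show "kron (mat a a' f) (mat b b' g) $$ (i, j) =
    mat (a*b) (a'*b') (\<lambda>(i,j). f (i div b, j div b') * g (i mod b, j mod b')) $$ (i, j)"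
    using i j by simp
qed auto

datatype pl = PI | PX | PZ | PY

definition pe :: "pl \<Rightarrow> nat \<times> nat \<Rightarrow> real" where
  "pe a = (\<lambda>(i,j). case a of
    PI \<Rightarrow> (if i = j then 1 else 0)
  | PX \<Rightarrow> (if i = j then 0 else 1)
  | PZ \<Rightarrow> (if i = j then (if i = 0 then 1 else -1) else 0)
  | PY \<Rightarrow> (if i = j then 0 else (if i = 0 then -1 else 1)))"

definition pm :: "pl \<Rightarrow> real mat" where
  "pm a = mat 2 2 (pe a)"

lemma pm_carrier[simp]: "pm a \<in> carrier_mat 2 2" by (simp add: pm_def)
lemma pm_dims[simp]: "dim_row (pm a) = 2" "dim_col (pm a) = 2" by (simp_all add: pm_def)

lemma Xm_pm: "Xm = pm PX"
  unfolding Xm_def pm_def mat_of_rows_list_def pe_def by (rule eq_matI) (auto simp: numeral_2_eq_2 less_Suc_eq)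
lemma Zm_pm: "Zm = pm PZ"
  unfolding Zm_def pm_def mat_of_rows_list_def pe_def by (rule eq_matI) (auto simp: numeral_2_eq_2 less_Suc_eq)
lemma one_pm: "1\<^sub>m 2 = pm PI"
  unfolding pm_def pe_def by (rule eq_matI) auto
lemma XZ_pm: "Xm * Zm = pm PY"
  unfolding Xm_pm Zm_pm pm_def mat_mult_mat mat_eq_mat by (simp add: all_less_2 sum_lt_2 pe_def)

fun pp :: "pl \<Rightarrow> pl \<Rightarrow> pl" where
  "pp PI b = b" | "pp a PI = a"
| "pp PX PX = PI" | "pp PX PZ = PY" | "pp PX PY = PZ"
| "pp PZ PX = PY" | "pp PZ PZ = PI" | "pp PZ PY = PX"
| "pp PY PX = PZ" | "pp PY PZ = PX" | "pp PY PY = PI"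

fun ph :: "pl \<Rightarrow> pl \<Rightarrow> real" where
  "ph PZ PX = -1" | "ph PZ PY = -1" | "ph PY PX = -1" | "ph PY PY = -1" | "ph _ _ = 1"

lemma pm_mult: "pm a * pm b = ph a b \<cdot>\<^sub>m pm (pp a b)"
  unfolding pm_def mat_mult_mat smult_mat_mat mat_eq_mat
  by (cases a; cases b) (simp_all add: all_less_2 sum_lt_2 pe_def)


lemma sum_lt_4: "(\<Sum>k<4::nat. f k) = f 0 + f 1 + f 2 + (f 3 :: real)"
  by (simp add: numeral_eq_Suc)

lemma smult_smult_mat: "a \<cdot>\<^sub>m (b \<cdot>\<^sub>m A) = (a * b) \<cdot>\<^sub>m (A :: real mat)"
  by (rule eq_matI) simp_all
lemma one_smult_mat': "1 \<cdot>\<^sub>m (A :: real mat) = A"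
  by (rule eq_matI) simp_all
lemma uminus_smult: "- (A :: real mat) = (-1) \<cdot>\<^sub>m A"
  by (rule eq_matI) simp_all

fun hT :: "pl \<Rightarrow> real \<times> pl" where
  "hT PI = (1, PI)" | "hT PX = (1, PZ)" | "hT PZ = (1, PX)" | "hT PY = (-1, PY)"
fun zT :: "pl \<Rightarrow> real \<times> pl" where
  "zT PI = (1, PI)" | "zT PX = (-1, PX)" | "zT PZ = (1, PZ)" | "zT PY = (-1, PY)"

fun czT :: "pl \<Rightarrow> pl \<Rightarrow> real \<times> pl \<times> pl" where
  "czT PI PI = (1, PI, PI)" | "czT PI PX = (1, PZ, PX)" | "czT PI PZ = (1, PI, PZ)" | "czT PI PY = (1, PZ, PY)"
| "czT PX PI = (1, PX, PZ)" | "czT PX PX = (-1, PY, PY)" | "czT PX PZ = (1, PX, PI)" | "czT PX PY = (-1, PY, PX)"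
| "czT PZ PI = (1, PZ, PI)" | "czT PZ PX = (1, PI, PX)" | "czT PZ PZ = (1, PZ, PZ)" | "czT PZ PY = (1, PI, PY)"
| "czT PY PI = (1, PY, PZ)" | "czT PY PX = (-1, PX, PY)" | "czT PY PZ = (1, PY, PI)" | "czT PY PY = (-1, PX, PX)"

lemma Hm_mat: "Hm = mat 2 2 (\<lambda>(i,j). if i = 1 \<and> j = 1 then - (1 / sqrt 2) else 1 / sqrt 2)"
  unfolding Hm_def mat_of_rows_list_def by (rule eq_matI) (auto simp: numeral_2_eq_2 less_Suc_eq)

lemma CZm_mat: "CZm = mat 4 4 (\<lambda>(i,j). if i = j then (if i = 3 then -1 else 1) else 0)"
  unfolding CZm_def mat_of_rows_list_def by (rule eq_matI) (auto simp: numeral_eq_Suc less_Suc_eq)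

lemma H_conj: "Hm * pm a * Hm = fst (hT a) \<cdot>\<^sub>m pm (snd (hT a))"
proof -
  have hh: "1 / sqrt 2 * (1 / sqrt 2) = (1/2 :: real)"
    by (simp add: divide_simps)
  show ?thesis
    unfolding Hm_mat pm_def mat_mult_mat smult_mat_mat mat_eq_mat
    by (cases a) (simp_all add: all_less_2 sum_lt_2 pe_def hh algebra_simps)
qed

lemma Z_conj: "Zm * pm a * Zm = fst (zT a) \<cdot>\<^sub>m pm (snd (zT a))"
  unfolding Zm_pm pm_def mat_mult_mat smult_mat_mat mat_eq_mat
  by (cases a) (simp_all add: all_less_2 sum_lt_2 pe_def)

lemma CZ_conj: "CZm * kron (pm a) (pm b) * CZm =
   (case czT a b of (c, a', b') \<Rightarrow> c \<cdot>\<^sub>m kron (pm a') (pm b'))"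
  unfolding CZm_mat pm_def kron_mat_mat
  by (cases a; cases b) (simp_all add: mat_mult_mat smult_mat_mat mat_eq_mat all_less_4 sum_lt_4 pe_def)


definition tp :: "pl list \<Rightarrow> real mat" where "tp as = tensor_list (map pm as)"

lemma tp_Nil[simp]: "tp [] = 1\<^sub>m 1" by (simp add: tp_def)
lemma tp_Cons[simp]: "tp (a # as) = kron (pm a) (tp as)" by (simp add: tp_def)

lemma tp_carrier[simp]: "tp as \<in> carrier_mat (2 ^ length as) (2 ^ length as)"
proof (induction as)
  case Nil show ?case by simp
next
  case (Cons a as)
  then have "dim_row (tp as) = 2 ^ length as" "dim_col (tp as) = 2 ^ length as"
    unfolding carrier_mat_def by blast+
  then show ?case unfolding carrier_mat_def by simp
qed

lemma tp_dims[simp]: "dim_row (tp as) = 2 ^ length as" "dim_col (tp as) = 2 ^ length as"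
  using tp_carrier[of as] unfolding carrier_mat_def by blast+

lemma kron_one_left'[simp]: "kron (1\<^sub>m (Suc 0)) A = A"
  using kron_one_left by simp
lemma kron_one_right'[simp]: "kron A (1\<^sub>m (Suc 0)) = A"
  using kron_one_right by simp

lemma tp_append: "tp (as @ bs) = kron (tp as) (tp bs)"
  by (induction as) (simp_all add: kron_assoc)

lemma tp_replicate_PI: "tp (replicate k PI) = 1\<^sub>m (2 ^ k)"
proof (induction k)
  case 0 then show ?case by simp
next
  case (Suc k) then show ?case by (simp add: one_pm[symmetric] kron_one_one)
qed

lemma tp_mult: "length as = length bs \<Longrightarrow>
   tp as * tp bs = prod_list (map2 ph as bs) \<cdot>\<^sub>m tp (map2 pp as bs)"
proof (induction as arbitrary: bs)
  case Nil then show ?case by (simp add: one_smult_mat')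
next
  case (Cons a as)
  then obtain b bs' where bs: "bs = b # bs'" and l: "length as = length bs'" by (cases bs) auto
  have "tp (a # as) * tp bs = kron (pm a * pm b) (tp as * tp bs')"
  proof -
    have "tp bs' \<in> carrier_mat (2^length as) (2^length as)" using tp_carrier[of bs'] l by simp
    then show ?thesis unfolding bs tp_Cons by (rule kron_mult[OF pm_carrier tp_carrier pm_carrier])
  qed
  also have "\<dots> = kron (ph a b \<cdot>\<^sub>m pm (pp a b)) (prod_list (map2 ph as bs') \<cdot>\<^sub>m tp (map2 pp as bs'))"
    using Cons.IH[OF l] by (simp add: pm_mult)
  finally show ?case by (simp add: bs kron_smult_left kron_smult_right smult_smult_mat mult.commute)
qed

lemma kron3_conj:
  assumes A: "A \<in> carrier_mat p p" and B: "B \<in> carrier_mat m m" and C: "C \<in> carrier_mat q q"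
    and G: "G \<in> carrier_mat m m"
  shows "kron (1\<^sub>m p) (kron G (1\<^sub>m q)) * kron A (kron B C) * kron (1\<^sub>m p) (kron G (1\<^sub>m q))
       = kron A (kron (G * B * G) C)"
proof -
  have I1: "1\<^sub>m p \<in> carrier_mat p p" "1\<^sub>m q \<in> carrier_mat q q" by simp_all
  have KG: "kron G (1\<^sub>m q) \<in> carrier_mat (m*q) (m*q)" by (rule kron_carrier[OF G I1(2)])
  have KB: "kron B C \<in> carrier_mat (m*q) (m*q)" by (rule kron_carrier[OF B C])
  have KGB: "kron (G*B) C \<in> carrier_mat (m*q) (m*q)" by (rule kron_carrier[OF mult_carrier_mat[OF G B] C])
  have GB: "G * B \<in> carrier_mat m m" using G B by simp
  have "kron (1\<^sub>m p) (kron G (1\<^sub>m q)) * kron A (kron B C) = kron (1\<^sub>m p * A) (kron G (1\<^sub>m q) * kron B C)"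
    by (rule kron_mult[OF I1(1) KG A KB])
  also have "kron G (1\<^sub>m q) * kron B C = kron (G * B) (1\<^sub>m q * C)"
    by (rule kron_mult[OF G I1(2) B C])
  finally have 1: "kron (1\<^sub>m p) (kron G (1\<^sub>m q)) * kron A (kron B C) = kron A (kron (G * B) C)"
    using A C by simp
  have "kron A (kron (G * B) C) * kron (1\<^sub>m p) (kron G (1\<^sub>m q)) = kron (A * 1\<^sub>m p) (kron (G * B) C * kron G (1\<^sub>m q))"
    by (rule kron_mult[OF A KGB I1(1) KG])
  also have "kron (G * B) C * kron G (1\<^sub>m q) = kron (G * B * G) (C * 1\<^sub>m q)"
    by (rule kron_mult[OF GB C G I1(2)])
  finally show ?thesis using 1 A C by simp
qed


lemma Hm_carrier[simp]: "Hm \<in> carrier_mat 2 2" unfolding Hm_mat by simp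
lemma Zm_carrier[simp]: "Zm \<in> carrier_mat 2 2" unfolding Zm_pm by simp
lemma CZm_carrier[simp]: "CZm \<in> carrier_mat 4 4" unfolding CZm_mat by simp

lemma pow_split1: "1 \<le> i \<Longrightarrow> i \<le> n \<Longrightarrow> 2 ^ (i - 1) * (2 * 2 ^ (n - i)) = (2::nat) ^ n"
proof -
  assume "1 \<le> i" "i \<le> n"
  then have "i - 1 + Suc (n - i) = n" by simp
  then show ?thesis by (metis power_Suc power_add)
qed

lemma pow_split2: "1 \<le> i \<Longrightarrow> i + 1 \<le> n \<Longrightarrow> 2 ^ (i - 1) * (4 * 2 ^ (n - i - 1)) = (2::nat) ^ n"
proof -
  assume "1 \<le> i" "i + 1 \<le> n"
  then have "i - 1 + Suc (Suc (n - i - 1)) = n" by simp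
  then have "(2::nat) ^ n = 2 ^ (i - 1) * (2 * (2 * 2 ^ (n - i - 1)))" by (metis power_Suc power_add)
  then show ?thesis by simp
qed

fun gact :: "gate \<Rightarrow> real \<times> pl list \<Rightarrow> real \<times> pl list" where
  "gact (H_g i) (s, as) = (s * fst (hT (as ! (i - 1))), as[i - 1 := snd (hT (as ! (i - 1)))])"
| "gact (Z_g i) (s, as) = (s * fst (zT (as ! (i - 1))), as[i - 1 := snd (zT (as ! (i - 1)))])"
| "gact (CZ_g i) (s, as) = (case czT (as ! (i - 1)) (as ! i) of (c, a', b') \<Rightarrow> (s * c, as[i - 1 := a', i := b']))"

fun gvalid :: "nat \<Rightarrow> gate \<Rightarrow> bool" where
  "gvalid n (H_g i) = (1 \<le> i \<and> i \<le> n)"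
| "gvalid n (Z_g i) = (1 \<le> i \<and> i \<le> n)"
| "gvalid n (CZ_g i) = (1 \<le> i \<and> i + 1 \<le> n)"

fun ival :: "real \<times> pl list \<Rightarrow> real mat" where
  "ival (s, as) = s \<cdot>\<^sub>m tp as"

lemma gact_length: "length (snd (gact g st)) = length (snd st)"
  by (cases st; cases g) (auto split: prod.split)

lemma op1_carrier: "1 \<le> i \<Longrightarrow> i \<le> n \<Longrightarrow> G \<in> carrier_mat 2 2 \<Longrightarrow> op1 n i G \<in> carrier_mat (2^n) (2^n)"
  unfolding op1_def using kron_carrier[OF one_carrier_mat kron_carrier[OF _ one_carrier_mat]] pow_split1
  by metis

lemma op2_carrier: "1 \<le> i \<Longrightarrow> i + 1 \<le> n \<Longrightarrow> G \<in> carrier_mat 4 4 \<Longrightarrow> op2 n i G \<in> carrier_mat (2^n) (2^n)"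
  unfolding op2_def using kron_carrier[OF one_carrier_mat kron_carrier[OF _ one_carrier_mat]] pow_split2
  by metis

lemma gate_carrier: assumes "gvalid n g" shows "gate_op n g \<in> carrier_mat (2^n) (2^n)"
proof (cases g)
  case (H_g i) then show ?thesis using assms by (simp add: op1_carrier)
next
  case (Z_g i) then show ?thesis using assms by (simp add: op1_carrier)
next
  case (CZ_g i) then show ?thesis using assms by (simp add: op2_carrier)
qed

lemma op1_tp:
  assumes i: "1 \<le> i" "i \<le> n" and l: "length as = n" and G: "G \<in> carrier_mat 2 2"
    and c: "G * pm (as ! (i - 1)) * G = c \<cdot>\<^sub>m pm a'"
  shows "op1 n i G * tp as * op1 n i G = c \<cdot>\<^sub>m tp (as[i - 1 := a'])"
proof -
  let ?p = "take (i - 1) as" and ?q = "drop i as" and ?a = "as ! (i - 1)"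
  have il: "i - 1 < length as" using i l by simp
  have as: "as = ?p @ ?a # ?q" using id_take_nth_drop[OF il] i by simp
  have lp: "length ?p = i - 1" and lq: "length ?q = n - i" using i l by auto
  have upd: "as[i - 1 := a'] = ?p @ a' # ?q" using upd_conv_take_nth_drop[OF il] i by simp
  have e1: "tp as = kron (tp ?p) (kron (pm ?a) (tp ?q))"
    by (subst as) (simp add: tp_append)
  have e2: "op1 n i G = kron (1\<^sub>m (2 ^ length ?p)) (kron G (1\<^sub>m (2 ^ length ?q)))"
    unfolding op1_def lp lq ..
  have "op1 n i G * tp as * op1 n i G = kron (tp ?p) (kron (G * pm ?a * G) (tp ?q))"
    unfolding e1 e2 by (rule kron3_conj[OF tp_carrier pm_carrier tp_carrier G])
  also have "\<dots> = c \<cdot>\<^sub>m tp (as[i - 1 := a'])"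
    unfolding c upd by (simp add: tp_append kron_smult_left kron_smult_right)
  finally show ?thesis .
qed

lemma op2_tp:
  assumes i: "1 \<le> i" "i + 1 \<le> n" and l: "length as = n"
  shows "op2 n i CZm * tp as * op2 n i CZm =
     (case czT (as ! (i - 1)) (as ! i) of (c, a', b') \<Rightarrow> c \<cdot>\<^sub>m tp (as[i - 1 := a', i := b']))"
proof -
  let ?p = "take (i - 1) as" and ?q = "drop (i + 1) as" and ?a = "as ! (i - 1)" and ?b = "as ! i"
  have as: "as = ?p @ ?a # ?b # ?q"
  proof -
    have d1: "drop (i - 1) as = ?a # drop i as" using Cons_nth_drop_Suc[of "i - 1" as] i l by simp
    have d2: "drop i as = ?b # ?q" using Cons_nth_drop_Suc[of i as] i l by simp
    have "as = take (i - 1) as @ drop (i - 1) as" by simp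
    also have "\<dots> = ?p @ ?a # ?b # ?q" by (simp only: d1 d2)
    finally show ?thesis .
  qed
  have lp: "length ?p = i - 1" and lq: "length ?q = n - i - 1" using i l by auto
  have B: "kron (pm ?a) (pm ?b) \<in> carrier_mat 4 4"
    using kron_carrier[OF pm_carrier pm_carrier] by simp
  have e1: "tp as = kron (tp ?p) (kron (kron (pm ?a) (pm ?b)) (tp ?q))"
    by (subst as) (simp add: tp_append kron_assoc)
  have e2: "op2 n i CZm = kron (1\<^sub>m (2 ^ length ?p)) (kron CZm (1\<^sub>m (2 ^ length ?q)))"
    unfolding op2_def lp lq ..
  have "op2 n i CZm * tp as * op2 n i CZm = kron (tp ?p) (kron (CZm * kron (pm ?a) (pm ?b) * CZm) (tp ?q))"
    unfolding e1 e2 by (rule kron3_conj[OF tp_carrier B tp_carrier CZm_carrier])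
  also have "\<dots> = (case czT ?a ?b of (c, a', b') \<Rightarrow> c \<cdot>\<^sub>m tp (as[i - 1 := a', i := b']))"
  proof (cases "czT ?a ?b")
    case (fields c a' b')
    have upd: "as[i - 1 := a', i := b'] = ?p @ a' # b' # ?q"
      by (subst as) (use lp i in \<open>auto simp add: list_update_append\<close>)
    have "kron (tp ?p) (kron (CZm * kron (pm ?a) (pm ?b) * CZm) (tp ?q)) = c \<cdot>\<^sub>m tp (?p @ a' # b' # ?q)"
      unfolding CZ_conj fields by (simp add: tp_append kron_smult_left kron_smult_right kron_assoc)
    then show ?thesis by (simp only: fields upd prod.case)
  qed
  finally show ?thesis .
qed

lemma gate_conj:
  assumes v: "gvalid n g" and l: "length as = n"
  shows "gate_op n g * ival (s, as) * gate_op n g = ival (gact g (s, as))"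
proof -
  have Gc: "gate_op n g \<in> carrier_mat (2^n) (2^n)" using gate_carrier[OF v] .
  have T: "tp as \<in> carrier_mat (2^n) (2^n)" using tp_carrier[of as] l by simp
  have m1: "gate_op n g * (s \<cdot>\<^sub>m tp as) = s \<cdot>\<^sub>m (gate_op n g * tp as)"
    by (rule mult_smult_distrib[OF Gc T])
  have m2: "(s \<cdot>\<^sub>m (gate_op n g * tp as)) * gate_op n g = s \<cdot>\<^sub>m (gate_op n g * tp as * gate_op n g)"
    by (rule mult_smult_assoc_mat[OF mult_carrier_mat[OF Gc T] Gc])
  have "gate_op n g * ival (s, as) * gate_op n g = s \<cdot>\<^sub>m (gate_op n g * tp as * gate_op n g)"
    unfolding ival.simps m1 m2 ..
  also have "\<dots> = ival (gact g (s, as))"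
  proof (cases g)
    case (H_g i)
    then show ?thesis using v l
      by (simp add: op1_tp[OF _ _ l Hm_carrier H_conj] smult_smult_mat)
  next
    case (Z_g i)
    then show ?thesis using v l
      by (simp add: op1_tp[OF _ _ l Zm_carrier Z_conj] smult_smult_mat)
  next
    case (CZ_g i)
    then show ?thesis using v l
      by (simp add: op2_tp[OF _ _ l] smult_smult_mat split: prod.split)
  qed
  finally show ?thesis .
qed


lemma replicate_update_same[simp]: "(replicate n x)[k := x] = replicate n x"
  by (cases "k < n") (auto intro!: nth_equalityI simp: nth_list_update list_update_beyond)

lemma gact_id: "gvalid n g \<Longrightarrow> gact g (1, replicate n PI) = (1, replicate n PI)"
  by (cases g) (auto simp: list_update_same_conv)

lemma ival_carrier: "length as = n \<Longrightarrow> ival (s, as) \<in> carrier_mat (2^n) (2^n)"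
  using tp_carrier[of as] by simp

lemma gate_self_inv:
  assumes v: "gvalid n g" shows "gate_op n g * gate_op n g = 1\<^sub>m (2^n)"
proof -
  have Gc: "gate_op n g \<in> carrier_mat (2^n) (2^n)" using gate_carrier[OF v] .
  have "ival (1, replicate n PI) = 1\<^sub>m (2^n)" by (simp add: tp_replicate_PI one_smult_mat')
  moreover have "gate_op n g * ival (1, replicate n PI) * gate_op n g = ival (1, replicate n PI)"
    using gate_conj[OF v, of "replicate n PI" 1] gact_id[OF v] by simp
  ultimately show ?thesis using Gc by simp
qed

definition cinv :: "nat \<Rightarrow> gate list \<Rightarrow> real mat" where
  "cinv n gs = foldl (\<lambda>acc g. acc * gate_op n g) (1\<^sub>m (2 ^ n)) gs"

lemma circuit_snoc: "circuit_op n (gs @ [g]) = gate_op n g * circuit_op n gs"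
  by (simp add: circuit_op_def)
lemma cinv_snoc: "cinv n (gs @ [g]) = cinv n gs * gate_op n g"
  by (simp add: cinv_def)
lemma circuit_Nil: "circuit_op n [] = 1\<^sub>m (2^n)" by (simp add: circuit_op_def)
lemma cinv_Nil: "cinv n [] = 1\<^sub>m (2^n)" by (simp add: cinv_def)

lemma circuit_facts:
  assumes "\<forall>g\<in>set gs. gvalid n g"
  shows "circuit_op n gs \<in> carrier_mat (2^n) (2^n) \<and> cinv n gs \<in> carrier_mat (2^n) (2^n) \<and>
     circuit_op n gs * cinv n gs = 1\<^sub>m (2^n) \<and> cinv n gs * circuit_op n gs = 1\<^sub>m (2^n)"
  using assms
proof (induction gs rule: rev_induct)
  case Nil then show ?case by (simp add: circuit_Nil cinv_Nil)
next
  case (snoc g gs)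
  then have v: "gvalid n g" and IH: "circuit_op n gs \<in> carrier_mat (2^n) (2^n)" "cinv n gs \<in> carrier_mat (2^n) (2^n)"
     "circuit_op n gs * cinv n gs = 1\<^sub>m (2^n)" "cinv n gs * circuit_op n gs = 1\<^sub>m (2^n)" by auto
  have G: "gate_op n g \<in> carrier_mat (2^n) (2^n)" using gate_carrier[OF v] .
  have GG: "gate_op n g * gate_op n g = 1\<^sub>m (2^n)" using gate_self_inv[OF v] .
  let ?G = "gate_op n g" and ?C = "circuit_op n gs" and ?D = "cinv n gs"
  have c1: "?G * ?C \<in> carrier_mat (2^n) (2^n)" using G IH by simp
  have c2: "?D * ?G \<in> carrier_mat (2^n) (2^n)" using G IH by simp
  have "(?G * ?C) * (?D * ?G) = ?G * (?C * (?D * ?G))" by (rule assoc_mult_mat[OF G IH(1) c2])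
  also have "?C * (?D * ?G) = (?C * ?D) * ?G" by (rule assoc_mult_mat[symmetric, OF IH(1) IH(2) G])
  also have "?G * ((?C * ?D) * ?G) = 1\<^sub>m (2^n)" using IH G GG by simp
  finally have e1: "(?G * ?C) * (?D * ?G) = 1\<^sub>m (2^n)" .
  have c3: "?G * ?C \<in> carrier_mat (2^n) (2^n)" using G IH by simp
  have "(?D * ?G) * (?G * ?C) = ?D * (?G * (?G * ?C))" by (rule assoc_mult_mat[OF IH(2) G c3])
  also have "?G * (?G * ?C) = (?G * ?G) * ?C" by (rule assoc_mult_mat[symmetric, OF G G IH(1)])
  also have "?D * ((?G * ?G) * ?C) = 1\<^sub>m (2^n)" using IH G GG by simp
  finally have e2: "(?D * ?G) * (?G * ?C) = 1\<^sub>m (2^n)" .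
  show ?case using c1 c2 e1 e2 by (simp add: circuit_snoc cinv_snoc)
qed

lemma assoc5:
  assumes G: "G \<in> carrier_mat N N" and C: "C \<in> carrier_mat N N" and Q: "Q \<in> carrier_mat N N"
    and D: "D \<in> carrier_mat N N"
  shows "(G * C) * Q * (D * G) = G * (C * Q * D) * G"
proof -
  have CQ: "C * Q \<in> carrier_mat N N" using C Q by simp
  have CQD: "C * Q * D \<in> carrier_mat N N" using CQ D by simp
  have DG: "D * G \<in> carrier_mat N N" using D G by simp
  have "(G * C) * Q * (D * G) = (G * (C * Q)) * (D * G)" using assoc_mult_mat[OF G C Q] by simp
  also have "\<dots> = G * ((C * Q) * (D * G))" by (rule assoc_mult_mat[OF G CQ DG])
  also have "(C * Q) * (D * G) = ((C * Q) * D) * G" by (rule assoc_mult_mat[symmetric, OF CQ D G])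
  also have "G * (((C * Q) * D) * G) = (G * ((C * Q) * D)) * G" by (rule assoc_mult_mat[symmetric, OF G CQD G])
  finally show ?thesis .
qed

lemma mat_inv_eq:
  assumes C: "C \<in> carrier_mat m m" and B: "B \<in> carrier_mat m m"
    and CB: "C * B = 1\<^sub>m m" and BC: "B * C = 1\<^sub>m m"
  shows "mat_inv C = B"
proof -
  have dr: "dim_row C = m" using C by simp
  let ?P = "\<lambda>B. B \<in> carrier_mat (dim_row C) (dim_row C) \<and> C * B = 1\<^sub>m (dim_row C) \<and> B * C = 1\<^sub>m (dim_row C)"
  have "?P B" using B CB BC dr by simp
  then have P: "?P (mat_inv C)" unfolding mat_inv_def by (rule someI)
  then have B': "mat_inv C \<in> carrier_mat m m" "mat_inv C * C = 1\<^sub>m m" using dr by auto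
  have "mat_inv C = mat_inv C * (C * B)" using B'(1) CB by simp
  also have "\<dots> = (mat_inv C * C) * B" using B'(1) C B by (simp add: assoc_mult_mat)
  also have "\<dots> = B" using B'(2) B by simp
  finally show ?thesis .
qed

lemma foldl_gact_length: "length (snd (foldl (\<lambda>st g. gact g st) st gs)) = length (snd st)"
  by (induction gs arbitrary: st) (simp_all add: gact_length)

lemma conj_circuit:
  assumes v: "\<forall>g\<in>set gs. gvalid n g" and l: "length as = n"
  shows "conj_mat (circuit_op n gs) (ival (s, as)) = ival (foldl (\<lambda>st g. gact g st) (s, as) gs)"
proof -
  have inv: "mat_inv (circuit_op n gs) = cinv n gs"
    using circuit_facts[OF v] by (intro mat_inv_eq[where m="2^n"]) auto
  have "circuit_op n gs * ival (s, as) * cinv n gs = ival (foldl (\<lambda>st g. gact g st) (s, as) gs)"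
    using v
  proof (induction gs rule: rev_induct)
    case Nil
    have "ival (s, as) \<in> carrier_mat (2^n) (2^n)" using ival_carrier[OF l] .
    then show ?case using l by (simp add: circuit_Nil cinv_Nil)
  next
    case (snoc g gs)
    then have vg: "gvalid n g" and vs: "\<forall>g\<in>set gs. gvalid n g" by auto
    let ?G = "gate_op n g" and ?C = "circuit_op n gs" and ?D = "cinv n gs" and ?Q = "ival (s, as)"
    obtain s' as' where st: "foldl (\<lambda>st g. gact g st) (s, as) gs = (s', as')" by fastforce
    have l': "length as' = n" using foldl_gact_length[of "(s, as)" gs] st l by simp
    have G: "?G \<in> carrier_mat (2^n) (2^n)" using gate_carrier[OF vg] .
    have CD: "?C \<in> carrier_mat (2^n) (2^n)" "?D \<in> carrier_mat (2^n) (2^n)" using circuit_facts[OF vs] by auto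
    have Q: "?Q \<in> carrier_mat (2^n) (2^n)" using ival_carrier[OF l] .
    have "circuit_op n (gs @ [g]) * ?Q * cinv n (gs @ [g]) = ?G * (?C * ?Q * ?D) * ?G"
      unfolding circuit_snoc cinv_snoc by (rule assoc5[OF G CD(1) Q CD(2)])
    also have "\<dots> = ?G * ival (s', as') * ?G" using snoc.IH[OF vs] st by simp
    also have "\<dots> = ival (gact g (s', as'))" by (rule gate_conj[OF vg l'])
    finally show ?case using st by simp
  qed
  then show ?thesis unfolding conj_mat_def inv .
qed


definition mtr :: "real mat \<Rightarrow> real" where "mtr A = (\<Sum>i<dim_row A. A $$ (i,i))"

lemma mtr_kron:
  assumes A: "A \<in> carrier_mat a a" and B: "B \<in> carrier_mat b b"
  shows "mtr (kron A B) = mtr A * mtr B"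
proof -
  have "mtr (kron A B) = (\<Sum>k<a*b. A $$ (k div b, k div b) * B $$ (k mod b, k mod b))"
    unfolding mtr_def using A B by (intro sum.cong) auto
  also have "\<dots> = (\<Sum>i<a. \<Sum>j<b. A $$ (i, i) * B $$ (j, j))"
    by (subst sum_split_mult) (intro sum.cong refl, simp)
  also have "\<dots> = mtr A * mtr B"
    unfolding mtr_def using A B by (simp add: sum_product)
  finally show ?thesis .
qed

lemma mtr_smult: assumes "A \<in> carrier_mat N N" shows "mtr (c \<cdot>\<^sub>m A) = c * mtr A"
  unfolding mtr_def using assms by (simp add: sum_distrib_left)

lemma mtr_one: "mtr (1\<^sub>m N) = real N"
  unfolding mtr_def by simp

lemma mtr_pm: "mtr (pm a) = (if a = PI then 2 else 0)"
  unfolding mtr_def pm_def by (cases a) (simp_all add: sum_lt_2 pe_def)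

lemma mtr_tp: "mtr (tp ds) = prod_list (map (\<lambda>d. mtr (pm d)) ds)"
proof (induction ds)
  case Nil then show ?case by (simp add: mtr_one)
next
  case (Cons d ds) then show ?case by (simp add: mtr_kron[OF pm_carrier tp_carrier])
qed

lemma mtr_tp_zero: "\<exists>d\<in>set ds. d \<noteq> PI \<Longrightarrow> mtr (tp ds) = 0"
  unfolding mtr_tp by (induction ds) (auto simp: mtr_pm)

lemma ph_nonzero: "ph a b \<noteq> 0"
  by (cases a; cases b) simp_all

lemma prod_ph_nonzero: "prod_list (map2 ph as bs) \<noteq> 0"
proof (induction as arbitrary: bs)
  case Nil then show ?case by simp
next
  case (Cons a as) then show ?case by (cases bs) (simp_all add: ph_nonzero)
qed

lemma pp_PI_iff: "pp a b = PI \<longleftrightarrow> a = b"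
  by (cases a; cases b) simp_all

lemma map2_pp_self: "map2 pp bs bs = replicate (length bs) PI"
  by (induction bs) (simp_all add: pp_PI_iff)

lemma map2_ph_self: "map2 ph bs bs = map (\<lambda>b. ph b b) bs"
  by (induction bs) simp_all

lemma tp_self: "tp bs * tp bs = prod_list (map (\<lambda>b. ph b b) bs) \<cdot>\<^sub>m 1\<^sub>m (2 ^ length bs)"
  using tp_mult[of bs bs] by (simp add: map2_pp_self map2_ph_self tp_replicate_PI)

lemma ival_inj:
  assumes eq: "ival (c, bs) = ival (c', bs')" and c: "c \<noteq> 0" and l: "length bs' = length bs"
  shows "c' = c \<and> bs' = bs"
proof -
  let ?P = "prod_list (map2 ph bs' bs)" and ?N = "2 ^ length bs :: nat"
  have T: "tp bs \<in> carrier_mat ?N ?N" "tp bs' \<in> carrier_mat ?N ?N" using tp_carrier[of bs'] unfolding l by simp_all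
  have P0: "prod_list (map (\<lambda>b. ph b b) bs) \<noteq> 0" using prod_ph_nonzero[of bs bs] by (simp add: map2_ph_self)
  have "ival (c, bs) * tp bs = c \<cdot>\<^sub>m (tp bs * tp bs)" using mult_smult_assoc_mat[OF T(1) T(1)] by simp
  also have "\<dots> = (c * prod_list (map (\<lambda>b. ph b b) bs)) \<cdot>\<^sub>m 1\<^sub>m ?N" by (simp add: tp_self smult_smult_mat)
  finally have L: "ival (c, bs) * tp bs = (c * prod_list (map (\<lambda>b. ph b b) bs)) \<cdot>\<^sub>m 1\<^sub>m ?N" .
  have "ival (c', bs') * tp bs = c' \<cdot>\<^sub>m (tp bs' * tp bs)" using mult_smult_assoc_mat[OF T(2) T(1)] by simp
  also have "\<dots> = (c' * ?P) \<cdot>\<^sub>m tp (map2 pp bs' bs)" using l by (simp add: tp_mult smult_smult_mat)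
  finally have R: "ival (c', bs') * tp bs = (c' * ?P) \<cdot>\<^sub>m tp (map2 pp bs' bs)" .
  have trEq: "c * prod_list (map (\<lambda>b. ph b b) bs) * real ?N = c' * ?P * mtr (tp (map2 pp bs' bs))"
    using L R eq mtr_smult[OF one_carrier_mat, of _ ?N] mtr_smult[OF tp_carrier, of _ "map2 pp bs' bs"] mtr_one[of ?N]
    by metis
  have allPI: "\<forall>d\<in>set (map2 pp bs' bs). d = PI"
  proof (rule ccontr)
    assume "\<not> ?thesis"
    then have "mtr (tp (map2 pp bs' bs)) = 0" using mtr_tp_zero by blast
    with trEq have "c * prod_list (map (\<lambda>b. ph b b) bs) * real ?N = 0" by simp
    with c P0 show False by simp
  qed
  have bs: "bs' = bs"
  proof (rule nth_equalityI)
    show "length bs' = length bs" by (rule l)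
    fix i assume "i < length bs'"
    then have "map2 pp bs' bs ! i \<in> set (map2 pp bs' bs)" using l by (intro nth_mem) simp
    then have "pp (bs' ! i) (bs ! i) = PI" using allPI \<open>i < length bs'\<close> l by auto
    then show "bs' ! i = bs ! i" by (simp add: pp_PI_iff)
  qed
  have "mtr (tp (map2 pp bs' bs)) = real ?N"
    unfolding bs map2_pp_self tp_replicate_PI mtr_one by simp
  with trEq bs have "c * prod_list (map (\<lambda>b. ph b b) bs) * real ?N = c' * prod_list (map (\<lambda>b. ph b b) bs) * real ?N"
    by (simp add: map2_ph_self)
  with P0 have "c' = c" by simp
  with bs show ?thesis by simp
qed


abbreviation gfold :: "real \<times> pl list \<Rightarrow> gate list \<Rightarrow> real \<times> pl list" where
  "gfold st gs \<equiv> foldl (\<lambda>st g. gact g st) st gs"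

lemma gact_H_at1: "i = Suc (length pre) \<Longrightarrow>
   gact (H_g i) (s, pre @ a # L) = (s * fst (hT a), pre @ snd (hT a) # L)"
  by (simp add: nth_append list_update_append)
lemma gact_H_at2: "i = Suc (Suc (length pre)) \<Longrightarrow>
   gact (H_g i) (s, pre @ a # b # L) = (s * fst (hT b), pre @ a # snd (hT b) # L)"
  by (simp add: nth_append list_update_append)
lemma gact_Z_at1: "i = Suc (length pre) \<Longrightarrow>
   gact (Z_g i) (s, pre @ a # L) = (s * fst (zT a), pre @ snd (zT a) # L)"
  by (simp add: nth_append list_update_append)
lemma gact_CZ_at: "i = Suc (length pre) \<Longrightarrow>
   gact (CZ_g i) (s, pre @ a # b # L) = (case czT a b of (c, a', b') \<Rightarrow> (s * c, pre @ a' # b' # L))"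
  by (simp add: nth_append list_update_append split: prod.split)

definition dT :: "nat \<Rightarrow> pl \<Rightarrow> pl \<Rightarrow> real \<times> pl \<times> pl" where
  "dT d a b = (case gfold (1, [a, b]) (D_gates d 1) of (c, l) \<Rightarrow> (c, l ! 0, l ! 1))"

lemma D_act:
  assumes "d \<in> {1,2,3,4}"
  shows "gfold (s, pre @ a # b # L) (D_gates d (Suc (length pre))) =
    (s * fst (dT d a b), pre @ fst (snd (dT d a b)) # snd (snd (dT d a b)) # L)"
  using assms unfolding dT_def
  by (cases a; cases b; auto simp del: gact.simps simp: gact_H_at1[of _ "[]", simplified] gact_H_at2[of _ "[]", simplified]
        gact_CZ_at[of _ "[]", simplified] gact_H_at1 gact_H_at2 gact_CZ_at)


fun dsel :: "pl \<Rightarrow> nat" where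
  "dsel PI = 1" | "dsel PX = 2" | "dsel PZ = 3" | "dsel PY = 4"

lemma dsel_range: "dsel b \<in> {1,2,3,4}" by (cases b) simp_all

lemma dT_props:
  assumes a: "a \<in> {PX, PY}" and d: "d \<in> {1,2,3,4}"
  shows "fst (dT d a b) \<in> {1, -1}"
    and "fst (snd (dT d a b)) = PI \<longleftrightarrow> d = dsel b"
    and "d = dsel b \<Longrightarrow> snd (snd (dT d a b)) \<in> {PX, PY} \<and>
           ph (snd (snd (dT d a b))) (snd (snd (dT d a b))) = ph a a * ph b b"
  using a d unfolding dT_def
  by (cases b; auto simp del: gact.simps simp: gact_H_at1[of _ "[]", simplified] gact_H_at2[of _ "[]", simplified]
        gact_CZ_at[of _ "[]", simplified])+


fun gidx :: "gate \<Rightarrow> nat" where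
  "gidx (H_g i) = i" | "gidx (Z_g i) = i" | "gidx (CZ_g i) = i"

lemma gact_keep: "j + 2 \<le> gidx g \<Longrightarrow> snd (gact g st) ! j = snd st ! j"
  by (cases st; cases g) (auto split: prod.split)

lemma gfold_keep: "\<forall>g\<in>set gs. j + 2 \<le> gidx g \<Longrightarrow> snd (gfold st gs) ! j = snd st ! j"
  by (induction gs arbitrary: st) (simp_all add: gact_keep)

definition xg :: "nat \<Rightarrow> nat list \<Rightarrow> nat \<Rightarrow> nat \<Rightarrow> gate list" where
  "xg p ds e m = concat (map (\<lambda>j. D_gates (ds ! j) (Suc p + j)) [0..<m]) @ E_gates e (Suc p + m)"

lemma xg_Cons: "xg p (d # ds) e (Suc m) = D_gates d (Suc p) @ xg (Suc p) ds e m"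
proof -
  have "[0..<Suc m] = 0 # map Suc [0..<m]" by (simp add: upt_conv_Cons map_Suc_upt)
  then show ?thesis unfolding xg_def by (simp del: D_gates.simps upt_Suc add: o_def)
qed

lemma D_gates_idx: "g \<in> set (D_gates d k) \<Longrightarrow> k \<le> gidx g"
  by (auto split: if_splits)

lemma xg_idx: "\<forall>g\<in>set (xg p ds e m). Suc p \<le> gidx g"
  unfolding xg_def by (auto dest!: D_gates_idx split: if_splits)

lemma D_gates_valid: "1 \<le> k \<Longrightarrow> k + 1 \<le> n \<Longrightarrow> g \<in> set (D_gates d k) \<Longrightarrow> gvalid n g"
  by (auto split: if_splits)

lemma xg_valid: "\<forall>g\<in>set (xg p ds e m). gvalid (Suc p + m) g"
  unfolding xg_def by (auto intro: D_gates_valid split: if_splits)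

declare D_gates.simps[simp del]

lemma rep_app_nth: "k < N \<Longrightarrow> (replicate N x @ L) ! k = x"
  by (simp add: nth_append)

definition good :: "nat \<Rightarrow> real \<Rightarrow> pl \<Rightarrow> pl list \<Rightarrow> nat list \<times> nat \<Rightarrow> bool" where
  "good p s a rest x = (case x of (ds, e) \<Rightarrow> length ds = length rest \<and> set ds \<subseteq> {1,2,3,4} \<and> e \<in> {1,2} \<and>
     gfold (s, replicate p PI @ a # rest) (xg p ds e (length rest)) = (1, replicate (p + length rest) PI @ [PX]))"

lemma ph_self_X: "a \<in> {PX, PY} \<Longrightarrow> ph a a = 1 \<Longrightarrow> a = PX"
  by auto

lemma core:
  assumes "a \<in> {PX, PY}" "s \<in> {1, -1}" "prod_list (map (\<lambda>x. ph x x) (a # rest)) = 1"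
  shows "\<exists>!x. good p s a rest x"
  using assms
proof (induction rest arbitrary: p s a)
  case Nil
  then have a: "a = PX" by auto
  have E1: "gfold (s, replicate p PI @ [PX]) (E_gates 1 (Suc p)) = (s, replicate p PI @ [PX])" by simp
  have E2: "gfold (s, replicate p PI @ [PX]) (E_gates 2 (Suc p)) = (- s, replicate p PI @ [PX])"
    using gact_Z_at1[of "Suc p" "replicate p PI" s PX "[]"] by simp
  let ?e = "if s = 1 then 1 else 2 :: nat"
  show ?case
  proof (rule ex1I[of _ "([], ?e)"])
    show "good p s a [] ([], ?e)" using Nil.prems E1 E2 a by (auto simp: good_def xg_def)
  next
    fix x assume "good p s a [] x"
    then obtain ds e where x: "x = (ds, e)" and ds: "ds = []" and e: "e \<in> {1,2}"
      and f: "gfold (s, replicate p PI @ [PX]) (E_gates e (Suc p)) = (1, replicate p PI @ [PX])"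
      using a by (cases x) (auto simp: good_def xg_def)
    show "x = ([], ?e)"
    proof (cases "e = 1")
      case True then show ?thesis using f E1 x ds by auto
    next
      case False then have "e = 2" using e by auto
      then show ?thesis using f E2 x ds Nil.prems by auto
    qed
  qed
next
  case (Cons b rest)
  let ?m = "length rest"
  have key: "gfold (s, replicate p PI @ a # b # rest) (xg p (d # ds') e (Suc ?m)) =
      gfold (s * fst (dT d a b), replicate p PI @ fst (snd (dT d a b)) # snd (snd (dT d a b)) # rest) (xg (Suc p) ds' e ?m)"
    if "d \<in> {1,2,3,4}" for d ds' e
    using D_act[OF that, of s "replicate p PI" a b rest] by (simp add: xg_Cons)
  let ?d = "dsel b"
  obtain c a0 b' where dT0': "dT ?d a b = (c, a0, b')" by (cases "dT ?d a b") auto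
  have "a0 = PI" using dT_props(2)[OF Cons.prems(1) dsel_range[of b], of b] dT0' by simp
  then have dT0: "dT ?d a b = (c, PI, b')" using dT0' by simp
  have c: "c \<in> {1, -1}" using dT_props(1)[OF Cons.prems(1) dsel_range[of b], of b] dT0 by simp
  have b': "b' \<in> {PX, PY}" "ph b' b' = ph a a * ph b b"
    using dT_props(3)[OF Cons.prems(1) dsel_range[of b], of b] dT0 by simp_all
  have sc: "s * c \<in> {1, -1}" using c Cons.prems(2) by auto
  have par: "prod_list (map (\<lambda>x. ph x x) (b' # rest)) = 1" using Cons.prems(3) b'(2) by (simp add: mult.assoc)
  from Cons.IH[OF b'(1) sc par, of "Suc p"] obtain x0 where x0: "good (Suc p) (s * c) b' rest x0"
    and uq: "\<And>y. good (Suc p) (s * c) b' rest y \<Longrightarrow> y = x0" by blast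
  have rep: "replicate p PI @ PI # L = replicate (Suc p) PI @ L" for L
    by (simp add: replicate_app_Cons_same)
  have equiv: "good p s a (b # rest) (?d # ds', e) \<longleftrightarrow> good (Suc p) (s * c) b' rest (ds', e)" for ds' e
    using key[OF dsel_range[of b], of ds' e] dsel_range[of b] unfolding good_def dT0 by (auto simp: replicate_app_Cons_same)
  show ?case
  proof (rule ex1I[of _ "(?d # fst x0, snd x0)"])
    show "good p s a (b # rest) (?d # fst x0, snd x0)" using equiv x0 by (cases x0) auto
  next
    fix y assume y: "good p s a (b # rest) y"
    then obtain d ds' e where yy: "y = (d # ds', e)" and d: "d \<in> {1,2,3,4}"
      unfolding good_def by (cases y; cases "fst y") auto
    have "d = ?d"
    proof (rule ccontr)
      assume ne: "d \<noteq> ?d"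
      let ?st = "(s * fst (dT d a b), replicate p PI @ fst (snd (dT d a b)) # snd (snd (dT d a b)) # rest)"
      have f: "gfold ?st (xg (Suc p) ds' e ?m) = (1, replicate (p + Suc ?m) PI @ [PX])"
        using y key[OF d, of ds' e] unfolding yy good_def by simp
      have "snd (gfold ?st (xg (Suc p) ds' e ?m)) ! p = snd ?st ! p"
        using xg_idx[of "Suc p" ds' e ?m] by (intro gfold_keep) auto
      also have "\<dots> = fst (snd (dT d a b))" by (simp add: nth_append)
      finally have k: "snd (gfold ?st (xg (Suc p) ds' e ?m)) ! p = fst (snd (dT d a b))" .
      have tgt: "(replicate (p + Suc ?m) PI @ [PX]) ! p = PI" by (rule rep_app_nth) simp
      have "snd (gfold ?st (xg (Suc p) ds' e ?m)) ! p = PI" by (simp only: f snd_conv tgt)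
      then have "fst (snd (dT d a b)) = PI" using k by simp
      with dT_props(2)[OF Cons.prems(1) d] ne show False by simp
    qed
    then have "good (Suc p) (s * c) b' rest (ds', e)" using y equiv unfolding yy by simp
    then have "(ds', e) = x0" by (rule uq)
    then show "y = (?d # fst x0, snd x0)" using yy \<open>d = ?d\<close> by auto
  qed
qed


lemma pauli_ival:
  assumes "Q \<in> pauli_group n"
  shows "\<exists>s as. Q = ival (s, as) \<and> length as = n \<and> s \<in> {1, -1}"
proof -
  obtain s Ps where Q: "Q = s \<cdot>\<^sub>m tensor_list Ps" and s: "s \<in> {1, -1}" and l: "length Ps = n"
    and P: "set Ps \<subseteq> pauli1"
    using assms unfolding pauli_group_def by blast
  have "\<forall>x\<in>set Ps. \<exists>y. x = pm y"
  proof
    fix x assume "x \<in> set Ps"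
    then have "x \<in> pauli1" using P by blast
    then show "\<exists>y. x = pm y" unfolding pauli1_def
      using one_pm Xm_pm Zm_pm XZ_pm by blast
  qed
  then obtain as where "Ps = map pm as" by (auto simp: ex_map_conv[symmetric])
  then show ?thesis using Q s l by (auto simp: tp_def)
qed

lemma Xlast_ival: "1 \<le> n \<Longrightarrow> X_last n = ival (1, replicate (n - 1) PI @ [PX])"
  unfolding X_last_def by (simp add: tp_def one_smult_mat' one_pm Xm_pm)

lemma Zfirst_tp: "Z_first n = tp (PZ # replicate (n - 1) PI)"
  unfolding Z_first_def by (simp add: tp_def one_pm Zm_pm)

lemma pp_PI_right: "pp a PI = a" by (cases a) simp_all

lemma map2_pp_PI_right: "map2 pp xs (replicate (length xs) PI) = xs"
  by (induction xs) (simp_all add: pp_PI_right)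
lemma map2_pp_PI_left: "map2 pp (replicate (length xs) PI) xs = xs"
  by (induction xs) simp_all
lemma map2_ph_PI_right: "prod_list (map2 ph xs (replicate (length xs) PI)) = 1"
proof (induction xs)
  case (Cons x xs) then show ?case by (cases x) simp_all
qed simp
lemma map2_ph_PI_left: "prod_list (map2 ph (replicate (length xs) PI) xs) = 1"
proof (induction xs)
  case (Cons x xs) then show ?case by (cases x) simp_all
qed simp

lemma anticomm_letter:
  assumes s: "s \<in> {1, -1}" and l: "length rest = n - 1" and n: "1 \<le> n"
    and ac: "ival (s, a # rest) * Z_first n = - (Z_first n * ival (s, a # rest))"
  shows "a \<in> {PX, PY}"
proof (rule ccontr)
  assume na: "a \<notin> {PX, PY}"
  let ?N = "2 ^ n :: nat"
  have ln: "length (a # rest) = n" using l n by simp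
  have T: "tp (a # rest) \<in> carrier_mat ?N ?N" using tp_carrier[of "a # rest"] unfolding ln .
  have Zc: "Z_first n \<in> carrier_mat ?N ?N"
    using tp_carrier[of "PZ # replicate (n - 1) PI"] n unfolding Zfirst_tp by simp
  let ?z = "PZ # replicate (length rest) PI"
  have Zf: "Z_first n = tp ?z" using Zfirst_tp[of n] l by simp
  have "ival (s, a # rest) * Z_first n = s \<cdot>\<^sub>m (tp (a # rest) * tp ?z)"
    using mult_smult_assoc_mat[OF T Zc] unfolding Zf by simp
  also have "\<dots> = ival (s * ph a PZ, pp a PZ # rest)"
    using tp_mult[of "a # rest" ?z]
    by (simp add: smult_smult_mat map2_pp_PI_right map2_ph_PI_right mult.commute)
  finally have L: "ival (s, a # rest) * Z_first n = ival (s * ph a PZ, pp a PZ # rest)" .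
  have "Z_first n * ival (s, a # rest) = s \<cdot>\<^sub>m (tp ?z * tp (a # rest))"
    using mult_smult_distrib[OF Zc T] unfolding Zf by simp
  also have "\<dots> = ival (s * ph PZ a, pp PZ a # rest)"
    using tp_mult[of ?z "a # rest"]
    by (simp add: smult_smult_mat map2_pp_PI_left map2_ph_PI_left mult.commute)
  finally have R: "Z_first n * ival (s, a # rest) = ival (s * ph PZ a, pp PZ a # rest)" .
  have "- ival (s * ph PZ a, pp PZ a # rest) = ival (- (s * ph PZ a), pp PZ a # rest)"
    by (simp add: uminus_smult[of "_ \<cdot>\<^sub>m _"] smult_smult_mat)
  with ac L R have eq: "ival (s * ph a PZ, pp a PZ # rest) = ival (- (s * ph PZ a), pp PZ a # rest)" by simp
  have "s * ph a PZ \<noteq> 0" using s ph_nonzero[of a PZ] by auto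
  from ival_inj[OF eq this] have "- (s * ph PZ a) = s * ph a PZ" by simp
  moreover have "ph PZ a = 1" "ph a PZ = 1" using na by (cases a; simp)+
  ultimately show False using s by auto
qed

lemma square_parity:
  assumes s: "s \<in> {1, -1}" and l: "length as = n"
    and sq: "ival (s, as) * ival (s, as) = 1\<^sub>m (2 ^ n)"
  shows "prod_list (map (\<lambda>x. ph x x) as) = 1"
proof -
  let ?N = "2 ^ n :: nat" and ?P = "prod_list (map (\<lambda>x. ph x x) as)"
  have T: "tp as \<in> carrier_mat ?N ?N" using tp_carrier[of as] unfolding l .
  have ST: "s \<cdot>\<^sub>m tp as \<in> carrier_mat ?N ?N" using T by simp
  have e1: "(s \<cdot>\<^sub>m tp as) * (s \<cdot>\<^sub>m tp as) = s \<cdot>\<^sub>m (tp as * (s \<cdot>\<^sub>m tp as))"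
    by (rule mult_smult_assoc_mat[OF T ST])
  have e2: "tp as * (s \<cdot>\<^sub>m tp as) = s \<cdot>\<^sub>m (tp as * tp as)"
    by (rule mult_smult_distrib[OF T T])
  have "ival (s, as) * ival (s, as) = s \<cdot>\<^sub>m (tp as * (s \<cdot>\<^sub>m tp as))"
    using e1 by simp
  also have "\<dots> = (s * s * ?P) \<cdot>\<^sub>m 1\<^sub>m ?N"
    unfolding e2 by (simp add: tp_self smult_smult_mat l mult.assoc)
  finally have "ival (1, replicate n PI) = ival (s * s * ?P, replicate n PI)"
    using sq by (simp add: tp_replicate_PI one_smult_mat')
  from ival_inj[OF this] have "s * s * ?P = 1" by simp
  moreover have "s * s = 1" using s by auto
  ultimately show ?thesis by simp
qed

lemma xcircuit_xg: "1 \<le> n \<Longrightarrow> xcircuit_gates n ds e = xg 0 ds e (n - 1)"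
  unfolding xcircuit_gates_def xg_def by simp

theorem proposition4p12:
  fixes n :: nat and Q :: "real mat"
  assumes "n \<ge> 1"
    and "Q \<in> pauli_group n"
    and "Q * Q = 1\<^sub>m (2 ^ n)"
    and "Q \<noteq> 1\<^sub>m (2 ^ n)" and "Q \<noteq> - 1\<^sub>m (2 ^ n)"
    and "Q * Z_first n = - (Z_first n * Q)"
  shows "\<exists>!(ds, e). xcircuit_valid n ds e \<and>
           conj_mat (circuit_op n (xcircuit_gates n ds e)) Q = X_last n"
proof -
  obtain s as where Q: "Q = ival (s, as)" and l: "length as = n" and s: "s \<in> {1, -1}"
    using pauli_ival[OF assms(2)] by blast
  obtain a rest where as: "as = a # rest" using l assms(1) by (cases as) auto
  have lr: "length rest = n - 1" using l as by simp
  have a: "a \<in> {PX, PY}" using anticomm_letter[OF s lr assms(1)] assms(6) Q as by simp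
  have par: "prod_list (map (\<lambda>x. ph x x) (a # rest)) = 1"
    using square_parity[OF s l] assms(3) Q as by simp
  have tl: "length (replicate (n - 1) PI @ [PX]) = n" using assms(1) by simp
  have equiv: "(case x of (ds, e) \<Rightarrow> xcircuit_valid n ds e \<and>
           conj_mat (circuit_op n (xcircuit_gates n ds e)) Q = X_last n) \<longleftrightarrow> good 0 s a rest x" for x
  proof (cases x)
    case (Pair ds e)
    have v: "\<forall>g\<in>set (xcircuit_gates n ds e). gvalid n g"
      using xg_valid[of 0 ds e "n - 1"] assms(1) by (simp add: xcircuit_xg)
    obtain c' l' where st: "gfold (s, as) (xcircuit_gates n ds e) = (c', l')" by fastforce
    have ll: "length l' = n" using foldl_gact_length[of "(s, as)" "xcircuit_gates n ds e"] st l by simp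
    have cj: "conj_mat (circuit_op n (xcircuit_gates n ds e)) Q = ival (c', l')"
      using conj_circuit[OF v l, of s] st Q by simp
    have "conj_mat (circuit_op n (xcircuit_gates n ds e)) Q = X_last n \<longleftrightarrow>
          (c', l') = (1, replicate (n - 1) PI @ [PX])"
    proof
      assume "conj_mat (circuit_op n (xcircuit_gates n ds e)) Q = X_last n"
      then have "ival (1, replicate (n - 1) PI @ [PX]) = ival (c', l')"
        using cj Xlast_ival[OF assms(1)] by simp
      from ival_inj[OF this] ll tl show "(c', l') = (1, replicate (n - 1) PI @ [PX])" by simp
    next
      assume "(c', l') = (1, replicate (n - 1) PI @ [PX])"
      then show "conj_mat (circuit_op n (xcircuit_gates n ds e)) Q = X_last n"
        using cj Xlast_ival[OF assms(1)] by simp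
    qed
    then show ?thesis
      using Pair st lr assms(1) unfolding good_def xcircuit_valid_def as
      by (auto simp: xcircuit_xg)
  qed
  obtain x0 where g: "good 0 s a rest x0" and u: "\<And>y. good 0 s a rest y \<Longrightarrow> y = x0"
    using core[OF a s par, of 0] by blast
  show ?thesis
  proof (rule ex1I[of _ x0])
    show "case x0 of (ds, e) \<Rightarrow> xcircuit_valid n ds e \<and>
           conj_mat (circuit_op n (xcircuit_gates n ds e)) Q = X_last n"
      using equiv[of x0] g by simp
  next
    fix y assume "case y of (ds, e) \<Rightarrow> xcircuit_valid n ds e \<and>
           conj_mat (circuit_op n (xcircuit_gates n ds e)) Q = X_last n"
    then show "y = x0" using equiv[of y] u by simp
  qed
qed

end
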